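(* Let $(G,\sigma)$ be a connection graph with vertex set $V$, and let $H\subsetneq V$ be a nonempty proper subset. Suppose $f:V\to\mathbb{R}^{d\times d}$ is harmonic on $H$, i.e. $(\mathcal{L}f)(i)=\sum_{j\sim i}w_{ij}(f(i)-\sigma_{ij}f(j))=0_{d\times d}$ for every $i\in H$. Let $\|\cdot\|$ be any orthogonally invariant matrix norm on $\mathbb{R}^{d\times d}$. Then $$\max_{i\in\overline{H}}\|f(i)\|=\max_{i\in\partial H}\|f(i)\|.$$
   Context: A connection graph $(G,\sigma)$ consists of a finite connected weighted graph $G=(V,E,W)$ (weights $w_{ij}>0$ iff $\{i,j\}\in E$, no loops or multiple edges) and a map $\sigma$ from oriented edges to $\mathsf{O}(d)$ with $\sigma_{ji}=\sigma_{ij}^{\mathrm T}$. The vertex boundary is $\partial H=\{j\in V\setminus H:\ j\sim i\text{ for some }i\in H\}$ and $\overline{H}=H\cup\partial H$. *)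

theory Defs
  imports "HOL-Analysis.Analysis"
begin

definition adj :: "('v \<Rightarrow> 'v \<Rightarrow> real) \<Rightarrow> 'v \<Rightarrow> 'v \<Rightarrow> bool" where
  "adj w i j \<longleftrightarrow> w i j > 0"

definition connection_graph ::
  "'v set \<Rightarrow> ('v \<Rightarrow> 'v \<Rightarrow> real) \<Rightarrow> ('v \<Rightarrow> 'v \<Rightarrow> real^'d^'d) \<Rightarrow> bool" where
  "connection_graph V w \<sigma> \<longleftrightarrow>
     finite V \<and> V \<noteq> {} \<and>
     (\<forall>i\<in>V. \<forall>j\<in>V. w i j \<ge> 0 \<and> w i j = w j i) \<and>
     (\<forall>i\<in>V. w i i = 0) \<and>
     (\<forall>i\<in>V. \<forall>j\<in>V. adj w i j \<longrightarrow>
         orthogonal_matrix (\<sigma> i j) \<and> \<sigma> j i = transpose (\<sigma> i j)) \<and>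
     (\<forall>i\<in>V. \<forall>j\<in>V. (i, j) \<in> {(a, b). a \<in> V \<and> b \<in> V \<and> adj w a b}\<^sup>*)"

definition vertex_boundary :: "'v set \<Rightarrow> ('v \<Rightarrow> 'v \<Rightarrow> real) \<Rightarrow> 'v set \<Rightarrow> 'v set" where
  "vertex_boundary V w H = {j \<in> V - H. \<exists>i\<in>H. adj w j i}"

definition conn_laplacian ::
  "'v set \<Rightarrow> ('v \<Rightarrow> 'v \<Rightarrow> real) \<Rightarrow> ('v \<Rightarrow> 'v \<Rightarrow> real^'d^'d) \<Rightarrow> ('v \<Rightarrow> real^'d^'d) \<Rightarrow> 'v \<Rightarrow> real^'d^'d" where
  "conn_laplacian V w \<sigma> f i = (\<Sum>j\<in>{j\<in>V. adj w i j}. w i j *\<^sub>R (f i - \<sigma> i j ** f j))"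

definition orth_inv_matrix_norm :: "(real^'d^'d \<Rightarrow> real) \<Rightarrow> bool" where
  "orth_inv_matrix_norm N \<longleftrightarrow>
     (\<forall>A. N A \<ge> 0) \<and> (\<forall>A. N A = 0 \<longleftrightarrow> A = 0) \<and>
     (\<forall>c A. N (c *\<^sub>R A) = \<bar>c\<bar> * N A) \<and>
     (\<forall>A B. N (A + B) \<le> N A + N B) \<and>
     (\<forall>U W A. orthogonal_matrix U \<longrightarrow> orthogonal_matrix W \<longrightarrow> N (U ** A ** W) = N A)"

end

theory Submission
  imports Defs
begin

lemma N_sum_le:
  assumes "orth_inv_matrix_norm N" "finite A"
  shows "N (\<Sum>j\<in>A. F j) \<le> (\<Sum>j\<in>A. N (F j))"
  using assms(2)
proof (induction A rule: finite_induct)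
  case empty
  have "N 0 = 0" using assms(1) unfolding orth_inv_matrix_norm_def by blast
  then show ?case by simp
next
  case (insert x A)
  have "N (F x + sum F A) \<le> N (F x) + N (sum F A)"
    using assms(1) unfolding orth_inv_matrix_norm_def by blast
  then show ?case using insert by simp
qed

lemma submean:
  fixes V :: "'v set" and w :: "'v \<Rightarrow> 'v \<Rightarrow> real" and \<sigma> :: "'v \<Rightarrow> 'v \<Rightarrow> real^'d^'d"
    and f :: "'v \<Rightarrow> real^'d^'d" and N :: "real^'d^'d \<Rightarrow> real"
  assumes cg: "connection_graph V w \<sigma>" and iV: "i \<in> V"
    and lap: "conn_laplacian V w \<sigma> f i = 0"
    and N: "orth_inv_matrix_norm N"
  shows "(\<Sum>j\<in>{j\<in>V. adj w i j}. w i j) * N (f i) \<le> (\<Sum>j\<in>{j\<in>V. adj w i j}. w i j * N (f j))"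
proof -
  let ?A = "{j\<in>V. adj w i j}"
  have fin: "finite ?A" using cg unfolding connection_graph_def by auto
  have "(\<Sum>j\<in>?A. w i j *\<^sub>R f i) - (\<Sum>j\<in>?A. w i j *\<^sub>R (\<sigma> i j ** f j)) = 0"
    using lap unfolding conn_laplacian_def by (simp add: scaleR_diff_right sum_subtractf)
  hence eq: "(\<Sum>j\<in>?A. w i j) *\<^sub>R f i = (\<Sum>j\<in>?A. w i j *\<^sub>R (\<sigma> i j ** f j))"
    by (simp add: scaleR_sum_left)
  have D0: "(\<Sum>j\<in>?A. w i j) \<ge> 0" by (rule sum_nonneg) (auto simp: adj_def)
  have "(\<Sum>j\<in>?A. w i j) * N (f i) = N ((\<Sum>j\<in>?A. w i j) *\<^sub>R f i)"
    using N D0 unfolding orth_inv_matrix_norm_def by simp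
  also have "\<dots> = N (\<Sum>j\<in>?A. w i j *\<^sub>R (\<sigma> i j ** f j))" using eq by simp
  also have "\<dots> \<le> (\<Sum>j\<in>?A. N (w i j *\<^sub>R (\<sigma> i j ** f j)))" by (rule N_sum_le[OF N fin])
  also have "\<dots> = (\<Sum>j\<in>?A. w i j * N (f j))"
  proof (rule sum.cong)
    fix j assume j: "j \<in> ?A"
    hence wp: "w i j > 0" by (simp add: adj_def)
    have orth: "orthogonal_matrix (\<sigma> i j)" using cg iV j unfolding connection_graph_def by auto
    have "N (\<sigma> i j ** f j ** mat 1) = N (f j)"
      using N orth orthogonal_matrix_id unfolding orth_inv_matrix_norm_def by blast
    hence "N (\<sigma> i j ** f j) = N (f j)" by (simp add: matrix_mul_rid)
    then show "N (w i j *\<^sub>R (\<sigma> i j ** f j)) = w i j * N (f j)"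
      using N wp unfolding orth_inv_matrix_norm_def by simp
  qed simp
  finally show ?thesis .
qed

theorem proposition4p1:
  fixes V :: "'v set" and w :: "'v \<Rightarrow> 'v \<Rightarrow> real" and \<sigma> :: "'v \<Rightarrow> 'v \<Rightarrow> real^'d^'d"
    and H :: "'v set" and f :: "'v \<Rightarrow> real^'d^'d" and N :: "real^'d^'d \<Rightarrow> real"
  assumes "connection_graph V w \<sigma>"
    and "H \<subseteq> V" and "H \<noteq> {}" and "H \<noteq> V"
    and "\<forall>i\<in>H. conn_laplacian V w \<sigma> f i = 0"
    and "orth_inv_matrix_norm N"
  shows "Max ((\<lambda>i. N (f i)) ` (H \<union> vertex_boundary V w H))
       = Max ((\<lambda>i. N (f i)) ` vertex_boundary V w H)"
proof -
  note cg = assms(1)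
  define g where "g i = N (f i)" for i
  define B where "B = vertex_boundary V w H"
  define M where "M = Max (g ` (H \<union> B))"
  have finV: "finite V" using cg unfolding connection_graph_def by auto
  have BV: "B \<subseteq> V" unfolding B_def vertex_boundary_def by auto
  have finHB: "finite (H \<union> B)" using finV BV assms(2) finite_subset by blast
  have Mge: "g x \<le> M" if "x \<in> H \<union> B" for x
    unfolding M_def using finHB that by simp
  obtain x0 where x0: "x0 \<in> H \<union> B" "g x0 = M"
    unfolding M_def using finHB assms(3)
    by (metis (no_types, lifting) Max_in empty_is_image finite_imageI imageE sup_eq_bot_iff)
  have nbr: "j \<in> H \<union> B" if "i \<in> H" "j \<in> V" "adj w i j" for i j
  proof (cases "j \<in> H")
    case False
    have "w j i = w i j" using cg that assms(2) unfolding connection_graph_def by auto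
    hence "adj w j i" using that(3) by (simp add: adj_def)
    then show ?thesis using False that unfolding B_def vertex_boundary_def by auto
  qed simp
  have key: "\<exists>b\<in>B. g b = M"
  proof (rule ccontr)
    assume nb: "\<not> (\<exists>b\<in>B. g b = M)"
    define S where "S = {i\<in>H. g i = M}"
    have x0S: "x0 \<in> S" using x0 nb unfolding S_def by auto
    have closed: "j \<in> S" if iS: "i \<in> S" and jV: "j \<in> V" and a: "adj w i j" for i j
    proof -
      let ?A = "{j\<in>V. adj w i j}"
      have iH: "i \<in> H" and gi: "g i = M" using iS unfolding S_def by auto
      have finA: "finite ?A" using finV by auto
      have le: "g k \<le> M" if "k \<in> ?A" for k using nbr[OF iH] that Mge by auto
      have sm: "(\<Sum>k\<in>?A. w i k) * M \<le> (\<Sum>k\<in>?A. w i k * g k)"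
        using submean[OF cg _ _ assms(6), of i f] iH assms(2,5) gi unfolding g_def by auto
      have "(\<Sum>k\<in>?A. w i k * (M - g k)) = (\<Sum>k\<in>?A. w i k) * M - (\<Sum>k\<in>?A. w i k * g k)"
        by (simp add: algebra_simps sum_subtractf sum_distrib_right sum_distrib_left)
      hence s0: "(\<Sum>k\<in>?A. w i k * (M - g k)) \<le> 0" using sm by linarith
      have nn: "\<forall>k\<in>?A. 0 \<le> w i k * (M - g k)" using le by (auto simp: adj_def)
      have "(\<Sum>k\<in>?A. w i k * (M - g k)) = 0"
      proof -
        have "0 \<le> (\<Sum>k\<in>?A. w i k * (M - g k))" using nn by (intro sum_nonneg) auto
        then show ?thesis using s0 by linarith
      qed
      hence "\<forall>k\<in>?A. w i k * (M - g k) = 0"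
        using sum_nonneg_eq_0_iff[OF finA, of "\<lambda>k. w i k * (M - g k)"] nn by simp
      hence "w i j * (M - g j) = 0" using jV a by auto
      hence gj: "g j = M" using a by (simp add: adj_def)
      have "j \<in> H \<union> B" using nbr[OF iH jV a] .
      then show ?thesis using gj nb unfolding S_def by auto
    qed
    obtain v where v: "v \<in> V" "v \<notin> H" using assms(2,4) by blast
    have x0V: "x0 \<in> V" using x0S assms(2) unfolding S_def by auto
    have "(x0, v) \<in> {(a, b). a \<in> V \<and> b \<in> V \<and> adj w a b}\<^sup>*"
      using cg x0V v unfolding connection_graph_def by blast
    hence "v \<in> S"
    proof (induction rule: rtrancl_induct)
      case base then show ?case using x0S .
    next
      case (step y z) then show ?case using closed by auto
    qed
    then show False using v unfolding S_def by auto
  qed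
  then obtain b where b: "b \<in> B" "g b = M" by blast
  have finB: "finite B" using finV BV finite_subset by blast
  have "Max (g ` B) = M"
  proof (rule antisym)
    show "Max (g ` B) \<le> M" using finB b Mge by (auto intro: Max.boundedI)
    show "M \<le> Max (g ` B)" using finB b by (metis Max_ge finite_imageI image_eqI)
  qed
  then show ?thesis unfolding M_def g_def B_def by simp
qed

end
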